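(* For every constant $c\ge 1$ there exist graphs $G$ (with arbitrarily large number of vertices $n$) such that the following spanning-tree sampling procedure requires $\rho=\Omega(\log n)$ rounds in order to approximate all cuts of $G$ within a factor $c$ with constant probability: compute the effective conductance $c_e$ of every edge; start with $E'=\emptyset$, $w\equiv 0$; for each of $\rho$ rounds, independently pick a uniformly random spanning tree $T$ of $G$, and for each edge $e\in T$ add $e$ to $E'$ and increase $w_e$ by $c_e/\rho$. That is, if $\rho=o(\log n)$ then with probability bounded below by a positive constant there is a set $S\subseteq V$ with $w(\delta(S))$ and $|\delta(S)|$ differing by more than a factor $c$.
   Context: Graphs here may have parallel edges (unit weight per copy). $\delta(S)$ is the set of edges with exactly one endpoint in $S$. The effective conductance $c_e$ of an edge $e=st$ is the current flowing from $s$ to $t$ when every edge is a unit resistor and a unit voltage difference is imposed between $s$ and $t$. *)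

theory Defs
  imports "HOL-Probability.Probability"
begin

text \<open>A multigraph on vertex set {0..<n}: a list es of edges (pairs of endpoints);
  parallel edges are distinct list positions. Edges are identified by their index i < length es.\<close>

definition wf_graph :: "nat \<Rightarrow> (nat \<times> nat) list \<Rightarrow> bool" where
  "wf_graph n es = (\<forall>(u,v)\<in>set es. u < n \<and> v < n \<and> u \<noteq> v)"

definition adj_on :: "(nat \<times> nat) list \<Rightarrow> nat set \<Rightarrow> (nat \<times> nat) set" where
  "adj_on es T = {(u,v). \<exists>i\<in>T. i < length es \<and> (es ! i = (u,v) \<or> es ! i = (v,u))}"

definition connected_graph :: "nat \<Rightarrow> (nat \<times> nat) list \<Rightarrow> bool" where
  "connected_graph n es = (n \<ge> 1 \<and> (\<forall>u<n. \<forall>v<n. (u,v) \<in> (adj_on es {..<length es})\<^sup>*))"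

definition is_spanning_tree :: "nat \<Rightarrow> (nat \<times> nat) list \<Rightarrow> nat set \<Rightarrow> bool" where
  "is_spanning_tree n es T = (T \<subseteq> {..<length es} \<and> card T + 1 = n \<and>
     (\<forall>u<n. \<forall>v<n. (u,v) \<in> (adj_on es T)\<^sup>*))"

definition spanning_trees :: "nat \<Rightarrow> (nat \<times> nat) list \<Rightarrow> nat set set" where
  "spanning_trees n es = {T. is_spanning_tree n es T}"

text \<open>Net current leaving vertex v under potential phi, every edge a unit resistor.\<close>
definition netflow :: "(nat \<times> nat) list \<Rightarrow> (nat \<Rightarrow> real) \<Rightarrow> nat \<Rightarrow> real" where
  "netflow es phi v = (\<Sum>i<length es.
      (if fst (es ! i) = v then phi v - phi (snd (es ! i)) else 0)
    + (if snd (es ! i) = v then phi v - phi (fst (es ! i)) else 0))"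

definition eff_conductance :: "nat \<Rightarrow> (nat \<times> nat) list \<Rightarrow> nat \<Rightarrow> nat \<Rightarrow> real" where
  "eff_conductance n es s t = (THE c. \<exists>phi. phi s = 1 \<and> phi t = 0 \<and>
      (\<forall>v<n. v \<noteq> s \<and> v \<noteq> t \<longrightarrow> netflow es phi v = 0) \<and> c = netflow es phi s)"

definition edge_conductance :: "nat \<Rightarrow> (nat \<times> nat) list \<Rightarrow> nat \<Rightarrow> real" where
  "edge_conductance n es i = eff_conductance n es (fst (es ! i)) (snd (es ! i))"

definition sample_weight :: "nat \<Rightarrow> (nat \<times> nat) list \<Rightarrow> nat \<Rightarrow> (nat \<Rightarrow> nat set) \<Rightarrow> nat \<Rightarrow> real" where
  "sample_weight n es rho Ts i =
     real (card {j. j < rho \<and> i \<in> Ts j}) * (edge_conductance n es i / real rho)"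

definition cut_edges :: "(nat \<times> nat) list \<Rightarrow> nat set \<Rightarrow> nat set" where
  "cut_edges es S = {i. i < length es \<and> ((fst (es ! i) \<in> S) \<noteq> (snd (es ! i) \<in> S))}"

definition bad_cut_approx :: "real \<Rightarrow> nat \<Rightarrow> (nat \<times> nat) list \<Rightarrow> nat \<Rightarrow> (nat \<Rightarrow> nat set) \<Rightarrow> bool" where
  "bad_cut_approx c n es rho Ts = (\<exists>S\<subseteq>{..<n}.
     (\<Sum>i\<in>cut_edges es S. sample_weight n es rho Ts i) > c * real (card (cut_edges es S)) \<or>
     real (card (cut_edges es S)) > c * (\<Sum>i\<in>cut_edges es S. sample_weight n es rho Ts i))"

definition tree_samples :: "nat \<Rightarrow> (nat \<times> nat) list \<Rightarrow> nat \<Rightarrow> (nat \<Rightarrow> nat set) pmf" where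
  "tree_samples n es rho = Pi_pmf {..<rho} {} (\<lambda>_. pmf_of_set (spanning_trees n es))"

end

theory Submission imports Defs begin


lemma adj_on_sym: "(u,v) \<in> adj_on es T \<longleftrightarrow> (v,u) \<in> adj_on es T"
  unfolding adj_on_def by blast

lemma sym_adj_on: "sym (adj_on es T)"
  by (auto simp: sym_def adj_on_sym)

lemma rtrancl_adj_sym: "(u,v) \<in> (adj_on es T)\<^sup>* \<Longrightarrow> (v,u) \<in> (adj_on es T)\<^sup>*"
  using sym_rtrancl[OF sym_adj_on] by (auto simp: sym_def)

lemma cut_cross:
  assumes "(u,v) \<in> (adj_on es T)\<^sup>*" "u \<in> S" "v \<notin> S"
  shows "\<exists>i\<in>T. i \<in> cut_edges es S"
  using assms
proof (induction rule: rtrancl_induct)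
  case base thus ?case by simp
next
  case (step y z)
  show ?case
  proof (cases "y \<in> S")
    case False thus ?thesis using step by blast
  next
    case True
    from step(2) obtain i where "i \<in> T" "i < length es" "es ! i = (y,z) \<or> es ! i = (z,y)"
      unfolding adj_on_def by blast
    thus ?thesis using True step(5) unfolding cut_edges_def by auto
  qed
qed

lemma reach_from_cuts:
  assumes wf: "wf_graph n es" and T: "T \<subseteq> {..<length es}" and v0: "v0 < n"
    and cuts: "\<And>S. S \<subseteq> {..<n} \<Longrightarrow> v0 \<notin> S \<Longrightarrow> S \<noteq> {} \<Longrightarrow> \<exists>i\<in>T. i \<in> cut_edges es S"
  shows "\<forall>u<n. (u,v0) \<in> (adj_on es T)\<^sup>*"
proof (rule ccontr)
  assume nt: "\<not> (\<forall>u<n. (u,v0) \<in> (adj_on es T)\<^sup>*)"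
  define S where "S = {u. u < n \<and> (u,v0) \<notin> (adj_on es T)\<^sup>*}"
  have "S \<subseteq> {..<n}" "v0 \<notin> S" "S \<noteq> {}" using nt by (auto simp: S_def)
  then obtain i where i: "i \<in> T" "i \<in> cut_edges es S" using cuts by blast
  obtain x y where xy: "es ! i = (x,y)" by (cases "es ! i")
  have il: "i < length es" using i T by auto
  hence "(x,y) \<in> set es" using xy by (metis nth_mem)
  hence xyn: "x < n" "y < n" using wf unfolding wf_graph_def by auto
  have adj: "(x,y) \<in> adj_on es T" "(y,x) \<in> adj_on es T" using i il xy unfolding adj_on_def by auto
  from i(2) xy have xyS: "(x \<in> S \<and> y \<notin> S) \<or> (x \<notin> S \<and> y \<in> S)" unfolding cut_edges_def by auto
  thus False
  proof (elim disjE conjE)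
    assume "x \<in> S" "y \<notin> S"
    hence "(y,v0) \<in> (adj_on es T)\<^sup>*" using xyn S_def by auto
    hence "(x,v0) \<in> (adj_on es T)\<^sup>*" using adj(1) by (meson converse_rtrancl_into_rtrancl)
    thus False using \<open>x \<in> S\<close> S_def by auto
  next
    assume "x \<notin> S" "y \<in> S"
    hence "(x,v0) \<in> (adj_on es T)\<^sup>*" using xyn S_def by auto
    hence "(y,v0) \<in> (adj_on es T)\<^sup>*" using adj(2) by (meson converse_rtrancl_into_rtrancl)
    thus False using \<open>y \<in> S\<close> S_def by auto
  qed
qed

lemma all_pairs_from_root:
  assumes "\<forall>u<n. (u,v0) \<in> (adj_on es T)\<^sup>*"
  shows "\<forall>u<n. \<forall>v<n. (u,v) \<in> (adj_on es T)\<^sup>*"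
  using assms rtrancl_adj_sym by (meson rtrancl_trans)

lemma adj_on_mono: "T \<subseteq> T' \<Longrightarrow> adj_on es T \<subseteq> adj_on es T'"
  unfolding adj_on_def by blast

lemma netflow_diff: "netflow es (\<lambda>v. f v - g v) v = netflow es f v - netflow es g v"
  unfolding netflow_def sum_subtractf[symmetric] by (intro sum.cong) auto

lemma energy:
  assumes wf: "wf_graph n es"
  shows "(\<Sum>v<n. psi v * netflow es psi v) =
         (\<Sum>i<length es. (psi (fst (es!i)) - psi (snd (es!i)))^2)"
proof -
  have "(\<Sum>v<n. psi v * netflow es psi v) = (\<Sum>i<length es. \<Sum>v<n.
      (if fst (es ! i) = v then psi v * (psi v - psi (snd (es ! i))) else 0)
    + (if snd (es ! i) = v then psi v * (psi v - psi (fst (es ! i))) else 0))"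
    unfolding netflow_def sum_distrib_left
    by (subst sum.swap) (auto intro!: sum.cong simp: distrib_left)
  also have "\<dots> = (\<Sum>i<length es. (psi (fst (es!i)) - psi (snd (es!i)))^2)"
  proof (rule sum.cong[OF refl])
    fix i assume "i \<in> {..<length es}"
    hence "es ! i \<in> set es" by simp
    hence "fst (es!i) < n" "snd (es!i) < n" using wf unfolding wf_graph_def by auto
    thus "(\<Sum>v<n. (if fst (es ! i) = v then psi v * (psi v - psi (snd (es ! i))) else 0)
    + (if snd (es ! i) = v then psi v * (psi v - psi (fst (es ! i))) else 0)) =
      (psi (fst (es!i)) - psi (snd (es!i)))^2"
      by (simp add: sum.distrib power2_eq_square algebra_simps)
  qed
  finally show ?thesis .
qed

lemma harmonic_unique:
  assumes wf: "wf_graph n es" and conn: "connected_graph n es"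
    and s: "s < n" and t: "t < n"
    and h1: "phi1 s = 1" "phi1 t = 0" "\<forall>v<n. v \<noteq> s \<and> v \<noteq> t \<longrightarrow> netflow es phi1 v = 0"
    and h2: "phi2 s = 1" "phi2 t = 0" "\<forall>v<n. v \<noteq> s \<and> v \<noteq> t \<longrightarrow> netflow es phi2 v = 0"
  shows "netflow es phi1 s = netflow es phi2 s"
proof -
  define psi where "psi v = phi1 v - phi2 v" for v
  have nf: "netflow es psi v = netflow es phi1 v - netflow es phi2 v" for v
    unfolding psi_def by (rule netflow_diff)
  have "(\<Sum>v<n. psi v * netflow es psi v) = 0"
  proof (rule sum.neutral, rule ballI)
    fix v assume "v \<in> {..<n}"
    show "psi v * netflow es psi v = 0"
    proof (cases "v = s \<or> v = t")
      case True thus ?thesis using h1 h2 by (auto simp: psi_def)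
    next
      case False thus ?thesis using h1(3) h2(3) \<open>v \<in> {..<n}\<close> by (simp add: nf)
    qed
  qed
  hence sq: "(\<Sum>i<length es. (psi (fst (es!i)) - psi (snd (es!i)))^2) = 0"
    using energy[OF wf] by simp
  have edge: "psi (fst (es!i)) = psi (snd (es!i))" if "i < length es" for i
  proof -
    have "(psi (fst (es!i)) - psi (snd (es!i)))^2 = 0"
      using sq that by (subst (asm) sum_nonneg_eq_0_iff) auto
    thus ?thesis by simp
  qed
  have adjeq: "psi u = psi v" if "(u,v) \<in> adj_on es {..<length es}" for u v
    using that edge unfolding adj_on_def by (auto, metis fst_conv snd_conv, metis fst_conv snd_conv)
  have reacheq: "psi u = psi v" if "(u,v) \<in> (adj_on es {..<length es})\<^sup>*" for u v
    using that by (induction rule: rtrancl_induct) (auto dest: adjeq)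
  have zero: "psi u = 0" if "u < n" for u
  proof -
    have "(u,s) \<in> (adj_on es {..<length es})\<^sup>*" using conn that s unfolding connected_graph_def by auto
    thus ?thesis using reacheq h1 h2 psi_def by fastforce
  qed
  have "netflow es psi s = 0"
    unfolding netflow_def
  proof (rule sum.neutral, rule ballI)
    fix i assume "i \<in> {..<length es}"
    hence "es ! i \<in> set es" by simp
    hence "fst (es!i) < n" "snd (es!i) < n" using wf unfolding wf_graph_def by auto
    thus "(if fst (es ! i) = s then psi s - psi (snd (es ! i)) else 0) +
          (if snd (es ! i) = s then psi s - psi (fst (es ! i)) else 0) = 0"
      using zero s by auto
  qed
  thus ?thesis using nf by simp
qed

lemma eff_conductance_eq:
  assumes wf: "wf_graph n es" and conn: "connected_graph n es"
    and s: "s < n" and t: "t < n"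
    and h: "phi s = 1" "phi t = 0" "\<forall>v<n. v \<noteq> s \<and> v \<noteq> t \<longrightarrow> netflow es phi v = 0"
  shows "eff_conductance n es s t = netflow es phi s"
  unfolding eff_conductance_def
proof (rule the_equality)
  show "\<exists>phia. phia s = 1 \<and> phia t = 0 \<and> (\<forall>v<n. v \<noteq> s \<and> v \<noteq> t \<longrightarrow> netflow es phia v = 0) \<and>
          netflow es phi s = netflow es phia s" using h by blast
next
  fix c assume "\<exists>phia. phia s = 1 \<and> phia t = 0 \<and> (\<forall>v<n. v \<noteq> s \<and> v \<noteq> t \<longrightarrow> netflow es phia v = 0) \<and>
          c = netflow es phia s"
  then obtain p2 where "p2 s = 1" "p2 t = 0" "\<forall>v<n. v \<noteq> s \<and> v \<noteq> t \<longrightarrow> netflow es p2 v = 0"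
     "c = netflow es p2 s" by blast
  thus "c = netflow es phi s" using harmonic_unique[OF wf conn s t] h by metis
qed



lemma sum_lessThan_add:
  fixes f :: "nat \<Rightarrow> 'a::comm_monoid_add"
  shows "(\<Sum>i<a+b. f i) = (\<Sum>i<a. f i) + (\<Sum>r<b. f (a + r))"
  by (induction b) (auto simp: add.assoc)

lemma sum_lessThan_mult:
  fixes f :: "nat \<Rightarrow> 'a::comm_monoid_add"
  shows "(\<Sum>i<a*b. f i) = (\<Sum>h<a. \<Sum>r<b. f (h*b + r))"
proof (induction a)
  case 0 thus ?case by simp
next
  case (Suc a)
  have "(\<Sum>i<Suc a * b. f i) = (\<Sum>i<a*b + b. f i)" by (simp add: add.commute)
  also have "\<dots> = (\<Sum>i<a*b. f i) + (\<Sum>r<b. f (a*b + r))" by (rule sum_lessThan_add)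
  finally show ?case using Suc by simp
qed

lemma divmod_helper: "l < (n::nat) \<Longrightarrow> (h*n + l) div n = h \<and> (h*n + l) mod n = l"
  by simp

locale gad =
  fixes m K :: nat
  assumes m1: "m \<ge> 1" and K1: "K \<ge> 1"
begin

definition D where "D = m + m*K"
definition vmap :: "nat \<Rightarrow> nat \<Rightarrow> nat" where
  "vmap g l = (if l = Suc m then 0 else g * Suc m + 1 + l)"
definition encl :: "nat \<Rightarrow> nat \<times> nat" where
  "encl r = (if r < m then (0, Suc r) else (Suc ((r - m) div K), Suc m))"
definition enc :: "nat \<Rightarrow> nat \<times> nat" where
  "enc i = (vmap (i div D) (fst (encl (i mod D))), vmap (i div D) (snd (encl (i mod D))))"
definition NN :: "nat \<Rightarrow> nat" where "NN G = Suc (G * Suc m)"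
definition EE :: "nat \<Rightarrow> (nat \<times> nat) list" where "EE G = map enc [0..<G*D]"

lemma D_pos: "D > 0" using m1 by (simp add: D_def)
lemma m_less_D: "m < D" using m1 K1 by (simp add: D_def)

lemma length_EE[simp]: "length (EE G) = G*D" by (simp add: EE_def)
lemma nth_EE: "i < G*D \<Longrightarrow> EE G ! i = enc i" by (simp add: EE_def)

lemma owner_less: "r < D \<Longrightarrow> \<not> r < m \<Longrightarrow> (r - m) div K < m"
  using K1 by (simp add: D_def less_mult_imp_div_less mult.commute)

lemma encl_bounds: "r < D \<Longrightarrow> fst (encl r) \<le> m \<and> snd (encl r) \<le> Suc m \<and> fst (encl r) \<noteq> snd (encl r)"
  using owner_less[of r] by (auto simp: encl_def)

lemma enc_split: "r < D \<Longrightarrow> enc (h*D + r) = (vmap h (fst (encl r)), vmap h (snd (encl r)))"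
  unfolding enc_def using D_pos by simp

lemma vmap_le: "l \<le> m \<Longrightarrow> vmap h l = h * Suc m + 1 + l" by (simp add: vmap_def)
lemma vmap_center[simp]: "vmap h (Suc m) = 0" by (simp add: vmap_def)

lemma vmap_inj: "l \<le> m \<Longrightarrow> l' \<le> m \<Longrightarrow> vmap h l = vmap h' l' \<longleftrightarrow> h = h' \<and> l = l'"
proof -
  assume l: "l \<le> m" "l' \<le> m"
  have "(h * Suc m + l) div Suc m = h" "(h * Suc m + l) mod Suc m = l"
       "(h' * Suc m + l') div Suc m = h'" "(h' * Suc m + l') mod Suc m = l'"
    using l divmod_helper[of l "Suc m" h] divmod_helper[of l' "Suc m" h'] by auto
  thus ?thesis using l by (auto simp: vmap_le)
qed

lemma vmap_nz: "l \<le> m \<Longrightarrow> vmap h l \<noteq> 0" by (simp add: vmap_le)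

lemma vmap_less: "h < G \<Longrightarrow> l \<le> Suc m \<Longrightarrow> vmap h l < NN G"
proof -
  assume a: "h < G" "l \<le> Suc m"
  show ?thesis
  proof (cases "l = Suc m")
    case True thus ?thesis by (simp add: NN_def)
  next
    case False
    hence "vmap h l = h * Suc m + 1 + l" "l \<le> m" using a by (auto simp: vmap_def)
    moreover have "h * Suc m + Suc m \<le> G * Suc m"
      using a(1) by (metis Suc_leI mult_Suc mult_le_mono1 add.commute)
    ultimately show ?thesis by (simp add: NN_def)
  qed
qed

lemma vertex_decomp:
  assumes "v < NN G" "v \<noteq> 0"
  shows "\<exists>h l. h < G \<and> l \<le> m \<and> v = vmap h l"
proof -
  define h where "h = (v - 1) div Suc m"
  define l where "l = (v - 1) mod Suc m"
  have "v - 1 = h * Suc m + l" unfolding h_def l_def by (rule div_mult_mod_eq[symmetric])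
  moreover have "l \<le> m" by (simp add: l_def less_Suc_eq_le)
  moreover have "h < G" using assms by (simp add: h_def NN_def less_mult_imp_div_less)
  ultimately show ?thesis using assms by (intro exI[of _ h] exI[of _ l]) (auto simp: vmap_le)
qed

lemma edge_decomp:
  assumes "i < G*D"
  obtains h r where "h < G" "r < D" "i = h*D + r"
proof -
  have "i = (i div D)*D + i mod D" by (rule div_mult_mod_eq[symmetric])
  moreover have "i div D < G" using assms D_pos by (simp add: less_mult_imp_div_less)
  moreover have "i mod D < D" using D_pos by simp
  ultimately show ?thesis using that by blast
qed

lemma wf_EE: "wf_graph (NN G) (EE G)"
  unfolding wf_graph_def
proof (intro ballI, clarify)
  fix u v assume "(u,v) \<in> set (EE G)"
  then obtain i where i: "i < G*D" "EE G ! i = (u,v)" by (auto simp: in_set_conv_nth)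
  obtain h r where hr: "h < G" "r < D" "i = h*D + r" using edge_decomp[OF i(1)] by blast
  have e: "(u,v) = (vmap h (fst (encl r)), vmap h (snd (encl r)))"
    using i hr nth_EE enc_split by simp
  have b: "fst (encl r) \<le> m" "snd (encl r) \<le> Suc m" "fst (encl r) \<noteq> snd (encl r)"
    using encl_bounds[OF hr(2)] by auto
  show "u < NN G \<and> v < NN G \<and> u \<noteq> v"
  proof (intro conjI)
    show "u < NN G" "v < NN G" using e b vmap_less[OF hr(1)] by auto
    show "u \<noteq> v"
    proof (cases "snd (encl r) = Suc m")
      case True thus ?thesis using e b vmap_nz by auto
    next
      case False thus ?thesis using e b vmap_inj by auto
    qed
  qed
qed

end


context gad begin

definition lcut :: "nat set \<Rightarrow> nat set \<Rightarrow> bool" where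
  "lcut X S = (\<exists>r\<in>X. (fst (encl r) \<in> S) \<noteq> (snd (encl r) \<in> S))"
definition L0 :: "nat set set" where
  "L0 = {X. X \<subseteq> {..<D} \<and> card X = Suc m \<and> (\<forall>S. S \<subseteq> {..m} \<longrightarrow> S \<noteq> {} \<longrightarrow> lcut X S)}"
definition loc :: "nat \<Rightarrow> nat set \<Rightarrow> nat set" where
  "loc g T = {r. r < D \<and> g*D + r \<in> T}"
definition owner :: "nat \<Rightarrow> nat" where
  "owner r = (if r < m then r else (r - m) div K)"

lemma idx_less: "h < G \<Longrightarrow> r < D \<Longrightarrow> h*D + r < G*D"
proof -
  assume "h < G" "r < D"
  hence "h*D + r < Suc h * D" by simp
  also have "\<dots> \<le> G * D" using \<open>h < G\<close> by (intro mult_le_mono1) simp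
  finally show ?thesis .
qed

lemma vmap_in_iff:
  assumes "0 \<notin> S'" "l \<le> Suc m"
  shows "vmap h l \<in> S' \<longleftrightarrow> l \<in> {l. l \<le> m \<and> vmap h l \<in> S'}"
  using assms by (cases "l = Suc m") auto

lemma cross_local:
  assumes "h < G" "r < D" "0 \<notin> S'"
  shows "h*D + r \<in> cut_edges (EE G) S' \<longleftrightarrow>
     (fst (encl r) \<in> {l. l \<le> m \<and> vmap h l \<in> S'}) \<noteq> (snd (encl r) \<in> {l. l \<le> m \<and> vmap h l \<in> S'})"
proof -
  have i: "h*D + r < G*D" using idx_less assms by blast
  have e: "EE G ! (h*D + r) = (vmap h (fst (encl r)), vmap h (snd (encl r)))"
    using nth_EE[OF i] enc_split[OF assms(2)] by simp
  have b: "fst (encl r) \<le> Suc m" "snd (encl r) \<le> Suc m" using encl_bounds[OF assms(2)] by auto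
  show ?thesis unfolding cut_edges_def using i e vmap_in_iff[OF assms(3) b(1), of h]
    vmap_in_iff[OF assms(3) b(2), of h] by simp
qed

lemma conn_local:
  assumes T: "T \<subseteq> {..<G*D}"
    and loc: "\<And>g S. g < G \<Longrightarrow> S \<subseteq> {..m} \<Longrightarrow> S \<noteq> {} \<Longrightarrow> lcut (loc g T) S"
  shows "\<forall>u<NN G. \<forall>v<NN G. (u,v) \<in> (adj_on (EE G) T)\<^sup>*"
proof (rule all_pairs_from_root, rule reach_from_cuts[OF wf_EE])
  show "T \<subseteq> {..<length (EE G)}" using T by simp
  show "0 < NN G" by (simp add: NN_def)
  fix S' assume S': "S' \<subseteq> {..<NN G}" "0 \<notin> S'" "S' \<noteq> {}"
  then obtain v where v: "v \<in> S'" by blast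
  hence "v < NN G" "v \<noteq> 0" using S' by auto
  then obtain h l where hl: "h < G" "l \<le> m" "v = vmap h l" using vertex_decomp by blast
  define Sh where "Sh = {l. l \<le> m \<and> vmap h l \<in> S'}"
  have "Sh \<subseteq> {..m}" "Sh \<noteq> {}" using hl v by (auto simp: Sh_def)
  then obtain r where r: "r \<in> loc h T" "(fst (encl r) \<in> Sh) \<noteq> (snd (encl r) \<in> Sh)"
    using loc[OF hl(1)] unfolding lcut_def by blast
  have "r < D" "h*D + r \<in> T" using r by (auto simp: loc_def)
  moreover have "h*D + r \<in> cut_edges (EE G) S'"
    using cross_local[OF hl(1) \<open>r < D\<close> S'(2)] r(2) by (simp add: Sh_def)
  ultimately show "\<exists>i\<in>T. i \<in> cut_edges (EE G) S'" by blast
qed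

lemma local_from_conn:
  assumes conn: "\<forall>u<NN G. \<forall>v<NN G. (u,v) \<in> (adj_on (EE G) T)\<^sup>*"
    and g: "g < G" and S: "S \<subseteq> {..m}" "S \<noteq> {}"
  shows "lcut (loc g T) S"
proof -
  define S' where "S' = vmap g ` S"
  obtain l where l: "l \<in> S" using S by blast
  have lm: "l \<le> m" using l S by auto
  have S'n: "S' \<subseteq> {..<NN G}" using S vmap_less[OF g] by (auto simp: S'_def)
  have z: "0 \<notin> S'"
  proof
    assume "0 \<in> S'"
    then obtain x where "x \<in> S" "vmap g x = 0" by (auto simp: S'_def)
    moreover have "x \<le> m" using \<open>x \<in> S\<close> S by auto
    ultimately show False using vmap_nz by blast
  qed
  have "vmap g l \<in> S'" using l by (simp add: S'_def)
  moreover have "(vmap g l, 0) \<in> (adj_on (EE G) T)\<^sup>*"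
    using conn vmap_less[OF g, of l] lm by (auto simp: NN_def)
  ultimately obtain i where i: "i \<in> T" "i \<in> cut_edges (EE G) S'"
    using cut_cross z by blast
  have "i < G*D" using i(2) by (simp add: cut_edges_def)
  then obtain h r where hr: "h < G" "r < D" "i = h*D + r" using edge_decomp by blast
  have cr: "(fst (encl r) \<in> {l. l \<le> m \<and> vmap h l \<in> S'}) \<noteq> (snd (encl r) \<in> {l. l \<le> m \<and> vmap h l \<in> S'})"
    using cross_local[OF hr(1,2) z] i(2) hr(3) by simp
  have Sh: "{l. l \<le> m \<and> vmap h l \<in> S'} = (if h = g then S else {})"
    using S vmap_inj by (auto simp: S'_def)
  have "h = g" using cr Sh by (cases "h = g") auto
  thus ?thesis using cr Sh hr i(1) unfolding lcut_def loc_def by auto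
qed

lemma card_loc_sum:
  assumes T: "T \<subseteq> {..<G*D}"
  shows "card T = (\<Sum>g<G. card (loc g T))"
proof -
  have eq: "T = (\<Union>g<G. (\<lambda>r. g*D + r) ` loc g T)"
  proof (intro equalityI subsetI)
    fix i assume i: "i \<in> T"
    hence "i < G*D" using T by auto
    then obtain h r where hr: "h < G" "r < D" "i = h*D + r" using edge_decomp by blast
    thus "i \<in> (\<Union>g<G. (\<lambda>r. g*D + r) ` loc g T)" using i by (auto simp: loc_def)
  qed (auto simp: loc_def)
  have "card T = (\<Sum>g<G. card ((\<lambda>r. g*D + r) ` loc g T))"
  proof (subst eq, rule card_UN_disjoint)
    show "finite {..<G}" by simp
    show "\<forall>g\<in>{..<G}. finite ((\<lambda>r. g*D + r) ` loc g T)" by (auto simp: loc_def)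
    show "\<forall>g\<in>{..<G}. \<forall>h\<in>{..<G}. g \<noteq> h \<longrightarrow>
        (\<lambda>r. g*D + r) ` loc g T \<inter> (\<lambda>r. h*D + r) ` loc h T = {}"
    proof (intro ballI impI)
      fix g h :: nat assume "g \<noteq> h"
      show "(\<lambda>r. g*D + r) ` loc g T \<inter> (\<lambda>r. h*D + r) ` loc h T = {}"
      proof (rule ccontr)
        assume "\<not> ?thesis"
        then obtain r r' where "r < D" "r' < D" "g*D + r = h*D + r'" by (auto simp: loc_def)
        note eq = this
        have "(g*D + r) div D = g" using divmod_helper[of r D g] eq(1) by blast
        moreover have "(h*D + r') div D = h" using divmod_helper[of r' D h] eq(2) by blast
        ultimately show False using eq(3) \<open>g \<noteq> h\<close> by metis
      qed
    qed
  qed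
  also have "\<dots> = (\<Sum>g<G. card (loc g T))"
    by (intro sum.cong refl card_image) (auto simp: inj_on_def)
  finally show ?thesis .
qed

lemma loc_build:
  assumes "g < G" "f g \<subseteq> {..<D}"
  shows "loc g {i. i < G*D \<and> i mod D \<in> f (i div D)} = f g"
proof -
  have "r < D \<Longrightarrow> (g*D + r) div D = g \<and> (g*D + r) mod D = r" for r using divmod_helper by blast
  thus ?thesis using assms idx_less[OF assms(1)] by (auto simp: loc_def)
qed

lemma build_loc:
  assumes "T \<subseteq> {..<G*D}"
  shows "{i. i < G*D \<and> i mod D \<in> loc (i div D) T} = T"
proof -
  have "i < G*D \<Longrightarrow> i mod D < D \<and> (i div D) * D + i mod D = i" for i
    using D_pos div_mult_mod_eq[of i D] by simp
  thus ?thesis using assms by (auto simp: loc_def)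
qed

end


context gad begin

lemma owner_lt: "r < D \<Longrightarrow> owner r < m"
  using owner_less by (auto simp: owner_def)

lemma encl_lt: "r < m \<Longrightarrow> encl r = (0, Suc r)" by (simp add: encl_def)
lemma encl_ge: "\<not> r < m \<Longrightarrow> encl r = (Suc (owner r), Suc m)" by (simp add: encl_def owner_def)

lemma lcut_single:
  assumes "X \<subseteq> {..<D}" "lcut X {Suc j}" "j < m"
  shows "\<exists>r\<in>X. owner r = j"
proof -
  obtain r where r: "r \<in> X" "(fst (encl r) \<in> {Suc j}) \<noteq> (snd (encl r) \<in> {Suc j})"
    using assms(2) by (auto simp: lcut_def)
  have "owner r = j"
  proof (cases "r < m")
    case True thus ?thesis using r by (auto simp: encl_lt owner_def)
  next
    case False thus ?thesis using r assms(3) by (auto simp: encl_ge)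
  qed
  thus ?thesis using r by blast
qed

lemma card_owner_sum:
  assumes "X \<subseteq> {..<D}"
  shows "card X = (\<Sum>j<m. card {r\<in>X. owner r = j})"
proof -
  have fin: "finite X" using assms finite_subset by blast
  have "X = (\<Union>j<m. {r\<in>X. owner r = j})" using assms owner_lt by auto
  hence "card X = card (\<Union>j<m. {r\<in>X. owner r = j})" by simp
  also have "\<dots> = (\<Sum>j<m. card {r\<in>X. owner r = j})"
    by (rule card_UN_disjoint) (use fin in auto)
  finally show ?thesis .
qed

lemma local_card:
  assumes X: "X \<subseteq> {..<D}" and cut: "\<And>S. S \<subseteq> {..m} \<Longrightarrow> S \<noteq> {} \<Longrightarrow> lcut X S"
  shows "card X \<ge> Suc m"
proof -
  have fin: "finite X" using X finite_subset by blast
  have ne: "card {r\<in>X. owner r = j} \<ge> 1" if jm: "j < m" for j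
  proof -
    have "lcut X {Suc j}" using jm by (intro cut) auto
    then obtain r where "r \<in> X" "owner r = j" using lcut_single[OF X _ jm] by auto
    hence "{r\<in>X. owner r = j} \<noteq> {}" by blast
    thus ?thesis using fin by (simp add: Suc_le_eq card_gt_0_iff)
  qed
  have "\<exists>j<m. card {r\<in>X. owner r = j} \<ge> 2"
  proof (rule ccontr)
    assume "\<not> ?thesis"
    hence one: "card {r\<in>X. owner r = j} = 1" if "j < m" for j using ne[OF that] that by force
    define S where "S = insert 0 (Suc ` {j. j < m \<and> j \<in> X})"
    have "S \<subseteq> {..m}" "S \<noteq> {}" by (auto simp: S_def)
    then obtain r where r: "r \<in> X" "(fst (encl r) \<in> S) \<noteq> (snd (encl r) \<in> S)"
      using cut unfolding lcut_def by blast
    have rD: "r < D" using r X by auto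
    show False
    proof (cases "r < m")
      case True thus False using r by (auto simp: encl_lt S_def)
    next
      case False
      have j: "owner r < m" using owner_lt[OF rD] .
      have "Suc m \<notin> S" by (auto simp: S_def)
      hence "Suc (owner r) \<in> S" using r False by (auto simp: encl_ge)
      hence oX: "owner r \<in> X" using j by (auto simp: S_def)
      have "{owner r, r} \<subseteq> {r'\<in>X. owner r' = owner r}" using oX r j by (auto simp: owner_def)
      moreover have "owner r \<noteq> r" using j False by auto
      ultimately have "card {r'\<in>X. owner r' = owner r} \<ge> 2"
        using fin by (metis (no_types, lifting) card_2_iff card_mono finite_subset mem_Collect_eq subsetI)
      thus False using one[OF j] by simp
    qed
  qed
  then obtain j0 where j0: "j0 < m" "card {r\<in>X. owner r = j0} \<ge> 2" by blast
  have "card X = (\<Sum>j<m. card {r\<in>X. owner r = j})" by (rule card_owner_sum[OF X])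
  also have "\<dots> = card {r\<in>X. owner r = j0} + (\<Sum>j\<in>{..<m}-{j0}. card {r\<in>X. owner r = j})"
    using j0 by (subst sum.remove[of _ j0]) auto
  also have "\<dots> \<ge> 2 + (\<Sum>j\<in>{..<m}-{j0}. 1)"
    using j0 ne by (intro add_mono sum_mono) auto
  finally show ?thesis using j0 by simp
qed

definition X0 :: "nat set" where "X0 = insert m {..<m}"

lemma X0_sub: "X0 \<subseteq> {..<D}" using m_less_D by (auto simp: X0_def)

lemma lcut_mono: "lcut X S \<Longrightarrow> X \<subseteq> Y \<Longrightarrow> lcut Y S" by (auto simp: lcut_def)

lemma lcut_X0:
  assumes "S \<subseteq> {..m}" "S \<noteq> {}"
  shows "lcut X0 S"
proof (cases "0 \<in> S")
  case True
  show ?thesis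
  proof (cases "\<exists>j<m. Suc j \<notin> S")
    case True
    then obtain j where "j < m" "Suc j \<notin> S" by blast
    thus ?thesis using \<open>0 \<in> S\<close> unfolding lcut_def X0_def by (intro bexI[of _ j]) (auto simp: encl_lt)
  next
    case False
    hence "Suc 0 \<in> S" using m1 by auto
    moreover have "Suc m \<notin> S" using assms by auto
    moreover have "encl m = (Suc 0, Suc m)" using encl_ge[of m] by (simp add: owner_def)
    ultimately show ?thesis unfolding lcut_def X0_def by (intro bexI[of _ m]) auto
  qed
next
  case False
  obtain l where l: "l \<in> S" using assms by blast
  then obtain j where j: "l = Suc j" using False by (cases l) auto
  have "j < m" using l j assms by auto
  thus ?thesis using l j False unfolding lcut_def X0_def by (intro bexI[of _ j]) (auto simp: encl_lt)
qed

lemma X0_L0: "X0 \<in> L0"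
  using X0_sub lcut_X0 by (auto simp: L0_def X0_def)

definition F0 :: "nat set set" where "F0 = {X\<in>L0. {..<m} \<subseteq> X}"

lemma X0_F0: "X0 \<in> F0" using X0_L0 by (auto simp: F0_def X0_def)

lemma finite_L0: "finite L0"
  by (rule finite_subset[of _ "Pow {..<D}"]) (auto simp: L0_def)

lemma F0_sub: "F0 \<subseteq> L0" by (auto simp: F0_def)

lemma sum_eq_lower:
  fixes A :: "'a set" and f :: "'a \<Rightarrow> nat"
  assumes "finite A" "\<And>x. x \<in> A \<Longrightarrow> f x \<ge> c" "(\<Sum>x\<in>A. f x) = card A * c" "y \<in> A"
  shows "f y = c"
proof (rule ccontr)
  assume "f y \<noteq> c"
  hence "f y > c" using assms(2,4) by force
  hence "(\<Sum>x\<in>A. c) < (\<Sum>x\<in>A. f x)"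
    using assms by (intro sum_strict_mono_ex1) auto
  thus False using assms(3) by simp
qed

lemma spanning_iff:
  "T \<in> spanning_trees (NN G) (EE G) \<longleftrightarrow> T \<subseteq> {..<G*D} \<and> (\<forall>g<G. loc g T \<in> L0)"
proof
  assume "T \<in> spanning_trees (NN G) (EE G)"
  hence T: "T \<subseteq> {..<G*D}" "card T + 1 = NN G"
    and conn: "\<forall>u<NN G. \<forall>v<NN G. (u,v) \<in> (adj_on (EE G) T)\<^sup>*"
    by (auto simp: spanning_trees_def is_spanning_tree_def)
  have cuts: "lcut (loc g T) S" if "g < G" "S \<subseteq> {..m}" "S \<noteq> {}" for g S
    using local_from_conn[OF conn that] .
  have lsub: "loc g T \<subseteq> {..<D}" for g by (auto simp: loc_def)
  have ge: "card (loc g T) \<ge> Suc m" if "g < G" for g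
    using local_card[OF lsub cuts[OF that]] .
  have "(\<Sum>g<G. card (loc g T)) = card {..<G} * Suc m"
    using card_loc_sum[OF T(1)] T(2) by (simp add: NN_def)
  hence eq: "card (loc g T) = Suc m" if "g < G" for g
    using sum_eq_lower[where A="{..<G}" and f="\<lambda>g. card (loc g T)" and c="Suc m" and y=g] ge that by auto
  show "T \<subseteq> {..<G*D} \<and> (\<forall>g<G. loc g T \<in> L0)"
    using T(1) eq cuts lsub by (auto simp: L0_def)
next
  assume a: "T \<subseteq> {..<G*D} \<and> (\<forall>g<G. loc g T \<in> L0)"
  have "card T = (\<Sum>g<G. card (loc g T))" using card_loc_sum a by blast
  also have "\<dots> = (\<Sum>g<G. Suc m)" using a by (intro sum.cong) (auto simp: L0_def)
  finally have c: "card T + 1 = NN G" by (simp add: NN_def)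
  have "\<forall>u<NN G. \<forall>v<NN G. (u,v) \<in> (adj_on (EE G) T)\<^sup>*"
    using a by (intro conn_local) (auto simp: L0_def)
  thus "T \<in> spanning_trees (NN G) (EE G)"
    using a c by (auto simp: spanning_trees_def is_spanning_tree_def)
qed

lemma connected_EE: "connected_graph (NN G) (EE G)"
proof -
  have "loc g {..<G*D} = {..<D}" if "g < G" for g using idx_less[OF that] by (auto simp: loc_def)
  hence "\<forall>u<NN G. \<forall>v<NN G. (u,v) \<in> (adj_on (EE G) {..<G*D})\<^sup>*"
    by (intro conn_local) (auto intro: lcut_mono[OF lcut_X0 X0_sub])
  thus ?thesis by (simp add: connected_graph_def NN_def)
qed

end


lemma sum_ite_single:
  assumes "r < (m::nat)"
  shows "(\<Sum>j<m. if j = r then a else b) = a + (real m - 1) * (b::real)"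
proof -
  have "(\<Sum>j<m. if j = r then a else b) = (if r = r then a else b) + (\<Sum>j\<in>{..<m}-{r}. if j = r then a else b)"
    using assms by (subst sum.remove[of _ r]) auto
  also have "(\<Sum>j\<in>{..<m}-{r}. if j = r then a else b) = (\<Sum>j\<in>{..<m}-{r}. b)"
    by (intro sum.cong) auto
  also have "\<dots> = real (m - 1) * b" using assms by simp
  also have "real (m - 1) = real m - 1" using assms by simp
  finally show ?thesis by simp
qed

context gad begin

definition ff :: "(nat \<Rightarrow> real) \<Rightarrow> nat \<Rightarrow> nat \<Rightarrow> nat \<Rightarrow> real" where
  "ff phi v u w = (if u = v then phi v - phi w else 0) + (if w = v then phi v - phi u else 0)"

lemma encl_bundle: "j < m \<Longrightarrow> k < K \<Longrightarrow> encl (m + (j*K + k)) = (Suc j, Suc m)"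
proof -
  assume a: "j < m" "k < K"
  have "(j*K + k) div K = j" using divmod_helper[of k K j] a by blast
  thus ?thesis by (simp add: encl_def)
qed

lemma netflow_EE:
  "netflow (EE G) phi v =
     (\<Sum>h<G. \<Sum>j<m. ff phi v (vmap h 0) (vmap h (Suc j)) + real K * ff phi v (vmap h (Suc j)) 0)"
proof -
  have "netflow (EE G) phi v = (\<Sum>i<G*D. ff phi v (fst (enc i)) (snd (enc i)))"
    unfolding netflow_def ff_def by (intro sum.cong) (auto simp: nth_EE)
  also have "\<dots> = (\<Sum>h<G. \<Sum>r<D. ff phi v (fst (enc (h*D + r))) (snd (enc (h*D + r))))"
    by (rule sum_lessThan_mult)
  also have "\<dots> = (\<Sum>h<G. \<Sum>r<D. ff phi v (vmap h (fst (encl r))) (vmap h (snd (encl r))))"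
    by (intro sum.cong refl) (simp add: enc_split)
  also have "\<dots> = (\<Sum>h<G. \<Sum>j<m. ff phi v (vmap h 0) (vmap h (Suc j)) + real K * ff phi v (vmap h (Suc j)) 0)"
  proof (rule sum.cong[OF refl])
    fix h assume "h \<in> {..<G}"
    have "(\<Sum>r<D. ff phi v (vmap h (fst (encl r))) (vmap h (snd (encl r)))) =
      (\<Sum>r<m. ff phi v (vmap h (fst (encl r))) (vmap h (snd (encl r)))) +
      (\<Sum>s<m*K. ff phi v (vmap h (fst (encl (m+s)))) (vmap h (snd (encl (m+s)))))"
      unfolding D_def by (rule sum_lessThan_add)
    also have "(\<Sum>r<m. ff phi v (vmap h (fst (encl r))) (vmap h (snd (encl r)))) =
        (\<Sum>j<m. ff phi v (vmap h 0) (vmap h (Suc j)))"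
      by (intro sum.cong refl) (simp add: encl_lt)
    also have "(\<Sum>s<m*K. ff phi v (vmap h (fst (encl (m+s)))) (vmap h (snd (encl (m+s))))) =
        (\<Sum>j<m. \<Sum>k<K. ff phi v (vmap h (fst (encl (m+(j*K+k))))) (vmap h (snd (encl (m+(j*K+k))))))"
      by (rule sum_lessThan_mult)
    also have "\<dots> = (\<Sum>j<m. real K * ff phi v (vmap h (Suc j)) 0)"
      by (intro sum.cong refl) (simp add: encl_bundle)
    finally show "(\<Sum>r<D. ff phi v (vmap h (fst (encl r))) (vmap h (snd (encl r)))) =
      (\<Sum>j<m. ff phi v (vmap h 0) (vmap h (Suc j)) + real K * ff phi v (vmap h (Suc j)) 0)"
      by (simp add: sum.distrib)
  qed
  finally show ?thesis .
qed

lemma vm_eq[simp]: "l \<le> m \<Longrightarrow> l' \<le> m \<Longrightarrow> vmap h l = vmap h' l' \<longleftrightarrow> h = h' \<and> l = l'"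
  by (rule vmap_inj)
lemma vm_nz[simp]: "l \<le> m \<Longrightarrow> vmap h l \<noteq> 0" "l \<le> m \<Longrightarrow> 0 \<noteq> vmap h l"
  using vmap_nz by auto

definition xx :: real where "xx = (real m - 1) / (real m + real K)"
definition yy :: real where "yy = (1 + real K * xx) / (1 + real K)"

definition phe :: "nat \<Rightarrow> nat \<Rightarrow> nat \<Rightarrow> real" where
  "phe g r v = (if v = vmap g 0 then 1 else if v = vmap g (Suc r) then 0
      else if (\<exists>j<m. v = vmap g (Suc j)) then yy else xx)"

lemma phe_a: "r < m \<Longrightarrow> phe g r (vmap h 0) = (if h = g then 1 else xx)"
  by (auto simp: phe_def)
lemma phe_b: "j < m \<Longrightarrow> r < m \<Longrightarrow> phe g r (vmap h (Suc j)) = (if h = g then (if j = r then 0 else yy) else xx)"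
  by (auto simp: phe_def)
lemma phe_0: "r < m \<Longrightarrow> phe g r 0 = xx"
  by (auto simp: phe_def)

lemma xx_eq: "xx * (real m + real K) = real m - 1"
  using m1 by (simp add: xx_def)
lemma yy_eq: "yy * (1 + real K) = 1 + real K * xx"
  by (simp add: yy_def add_pos_pos)

lemma nf_zero:
  assumes g: "g < G" and r: "r < m"
  shows "netflow (EE G) (phe g r) 0 = 0"
proof -
  have pt: "ff (phe g r) 0 (vmap h 0) (vmap h (Suc j)) + real K * ff (phe g r) 0 (vmap h (Suc j)) 0
      = (if h = g then real K * (if j = r then xx else xx - yy) else 0)" if "j < m" for h j
    using that r by (simp add: ff_def phe_b phe_0 Suc_leI)
  have "netflow (EE G) (phe g r) 0 =
      (\<Sum>h<G. \<Sum>j<m. if h = g then real K * (if j = r then xx else xx - yy) else 0)"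
    unfolding netflow_EE by (intro sum.cong refl) (simp add: pt)
  also have "\<dots> = (\<Sum>h<G. if h = g then (\<Sum>j<m. real K * (if j = r then xx else xx - yy)) else 0)"
    by (intro sum.cong refl) auto
  also have "\<dots> = (\<Sum>j<m. real K * (if j = r then xx else xx - yy))" using g by simp
  also have "\<dots> = real K * (xx + (real m - 1) * (xx - yy))"
    by (simp add: sum_distrib_left[symmetric] sum_ite_single[OF r])
  also have "\<dots> = 0"
  proof -
    have "(xx + (real m - 1) * (xx - yy)) * (1 + real K) = 0"
      using xx_eq yy_eq by (simp add: algebra_simps)
    thus ?thesis by simp
  qed
  finally show ?thesis .
qed

lemma nf_a:
  assumes h: "h < G" "h \<noteq> g" and g: "g < G" and r: "r < m"
  shows "netflow (EE G) (phe g r) (vmap h 0) = 0"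
proof -
  have pt: "ff (phe g r) (vmap h 0) (vmap h' 0) (vmap h' (Suc j)) + real K * ff (phe g r) (vmap h 0) (vmap h' (Suc j)) 0
      = 0" if "j < m" for h' j
    using that r h by (simp add: ff_def phe_b phe_a Suc_leI)
  show ?thesis unfolding netflow_EE by (intro sum.neutral ballI) (simp add: pt)
qed

lemma nf_b:
  assumes h: "h < G" and j: "j < m" and ne: "\<not> (h = g \<and> j = r)" and g: "g < G" and r: "r < m"
  shows "netflow (EE G) (phe g r) (vmap h (Suc j)) = 0"
proof -
  have val: "(phe g r (vmap h (Suc j)) - phe g r (vmap h 0)) + real K * (phe g r (vmap h (Suc j)) - xx) = 0"
  proof (cases "h = g")
    case True
    hence "j \<noteq> r" using ne by auto
    thus ?thesis using True j r yy_eq by (simp add: phe_a phe_b algebra_simps)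
  next
    case False thus ?thesis using j r by (simp add: phe_a phe_b)
  qed
  have pt: "ff (phe g r) (vmap h (Suc j)) (vmap h' 0) (vmap h' (Suc j')) + real K * ff (phe g r) (vmap h (Suc j)) (vmap h' (Suc j')) 0
      = 0" if "j' < m" for h' j'
  proof (cases "h' = h \<and> j' = j")
    case True thus ?thesis using val j r by (simp add: ff_def phe_0 Suc_leI algebra_simps)
  next
    case False thus ?thesis using that j by (auto simp: ff_def Suc_leI)
  qed
  show ?thesis unfolding netflow_EE by (intro sum.neutral ballI) (simp add: pt)
qed

lemma nf_s:
  assumes g: "g < G" and r: "r < m"
  shows "netflow (EE G) (phe g r) (vmap g 0) = real m * (real K + 1) / (real m + real K)"
proof -
  have pt: "ff (phe g r) (vmap g 0) (vmap h 0) (vmap h (Suc j)) + real K * ff (phe g r) (vmap g 0) (vmap h (Suc j)) 0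
      = (if h = g then (if j = r then 1 else 1 - yy) else 0)" if "j < m" for h j
    using that r by (simp add: ff_def phe_b phe_a Suc_leI)
  have "netflow (EE G) (phe g r) (vmap g 0) =
     (\<Sum>h<G. \<Sum>j<m. if h = g then (if j = r then 1 else 1 - yy) else 0)"
    unfolding netflow_EE by (intro sum.cong refl) (simp add: pt)
  also have "\<dots> = (\<Sum>h<G. if h = g then (\<Sum>j<m. if j = r then 1 else 1 - yy) else 0)"
    by (intro sum.cong refl) auto
  also have "\<dots> = 1 + (real m - 1) * (1 - yy)" using g by (simp add: sum_ite_single[OF r])
  also have "\<dots> = real m * (real K + 1) / (real m + real K)"
  proof -
    have p: "real m + real K > 0" using m1 by simp
    have q: "1 + real K > 0" by simp
    have x1: "1 - xx = (real K + 1) / (real m + real K)" using p by (simp add: xx_def field_simps)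
    have "1 - yy = real K * (1 - xx) / (1 + real K)" using q by (simp add: yy_def field_simps)
    also have "\<dots> = (real K * (1 + real K)) / ((real m + real K) * (1 + real K))"
      by (simp add: x1 add.commute)
    also have "\<dots> = real K / (real m + real K)" using q by simp
    finally have y1: "1 - yy = real K / (real m + real K)" .
    show ?thesis using p by (simp add: y1 field_simps)
  qed
  finally show ?thesis .
qed

end


context gad begin

definition cval :: real where "cval = real m * (real K + 1) / (real m + real K)"

lemma edge_a: "g < G \<Longrightarrow> r < m \<Longrightarrow> EE G ! (g*D + r) = (vmap g 0, vmap g (Suc r))"
  using nth_EE[OF idx_less[of g G r]] enc_split[of r g] m_less_D by (simp add: encl_lt)

lemma cond_val:
  assumes g: "g < G" and r: "r < m"
  shows "edge_conductance (NN G) (EE G) (g*D + r) = cval"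
proof -
  have "edge_conductance (NN G) (EE G) (g*D + r) = eff_conductance (NN G) (EE G) (vmap g 0) (vmap g (Suc r))"
    using edge_a[OF g r] by (simp add: edge_conductance_def)
  also have "\<dots> = netflow (EE G) (phe g r) (vmap g 0)"
  proof (rule eff_conductance_eq[OF wf_EE connected_EE])
    show "vmap g 0 < NN G" "vmap g (Suc r) < NN G" using vmap_less[OF g] r by auto
    show "phe g r (vmap g 0) = 1" using r by (simp add: phe_a)
    show "phe g r (vmap g (Suc r)) = 0" using r by (simp add: phe_b)
    show "\<forall>v<NN G. v \<noteq> vmap g 0 \<and> v \<noteq> vmap g (Suc r) \<longrightarrow> netflow (EE G) (phe g r) v = 0"
    proof (intro allI impI)
      fix v assume v: "v < NN G" "v \<noteq> vmap g 0 \<and> v \<noteq> vmap g (Suc r)"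
      show "netflow (EE G) (phe g r) v = 0"
      proof (cases "v = 0")
        case True thus ?thesis using nf_zero[OF g r] by simp
      next
        case False
        then obtain h l where hl: "h < G" "l \<le> m" "v = vmap h l" using vertex_decomp v(1) by blast
        show ?thesis
        proof (cases l)
          case 0
          hence "h \<noteq> g" using v hl by auto
          thus ?thesis using nf_a[OF hl(1) _ g r] hl 0 by simp
        next
          case (Suc j)
          hence "j < m" "\<not> (h = g \<and> j = r)" using hl v by auto
          thus ?thesis using nf_b[OF hl(1) _ _ g r] hl Suc by simp
        qed
      qed
    qed
  qed
  also have "\<dots> = cval" using nf_s[OF g r] by (simp add: cval_def)
  finally show ?thesis .
qed

lemma cut_a:
  assumes g: "g < G"
  shows "cut_edges (EE G) {vmap g 0} = (\<lambda>r. g*D + r) ` {..<m}"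
proof (intro equalityI subsetI)
  fix i assume i: "i \<in> cut_edges (EE G) {vmap g 0}"
  hence "i < G*D" by (simp add: cut_edges_def)
  then obtain h r where hr: "h < G" "r < D" "i = h*D + r" using edge_decomp by blast
  have z: "0 \<notin> {vmap g 0}" by simp
  have Sh: "{l. l \<le> m \<and> vmap h l \<in> {vmap g 0}} = (if h = g then {0} else {})" by auto
  have cr: "(fst (encl r) \<in> {l. l \<le> m \<and> vmap h l \<in> {vmap g 0}}) \<noteq> (snd (encl r) \<in> {l. l \<le> m \<and> vmap h l \<in> {vmap g 0}})"
    using cross_local[OF hr(1,2) z] i hr(3) by simp
  have "h = g" using cr Sh by (cases "h = g") auto
  moreover have "r < m"
  proof (rule ccontr)
    assume "\<not> r < m"
    thus False using cr Sh \<open>h = g\<close> by (simp add: encl_ge)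
  qed
  ultimately show "i \<in> (\<lambda>r. g*D + r) ` {..<m}" using hr by auto
next
  fix i assume "i \<in> (\<lambda>r. g*D + r) ` {..<m}"
  then obtain r where r: "r < m" "i = g*D + r" by auto
  have rD: "r < D" using r m_less_D by simp
  have z: "0 \<notin> {vmap g 0}" by simp
  have "(fst (encl r) \<in> {l. l \<le> m \<and> vmap g l \<in> {vmap g 0}}) \<noteq> (snd (encl r) \<in> {l. l \<le> m \<and> vmap g l \<in> {vmap g 0}})"
    using r by (auto simp: encl_lt)
  thus "i \<in> cut_edges (EE G) {vmap g 0}" using cross_local[OF g rD z] r by simp
qed

lemma bad_from_full:
  assumes g: "g < G" and rho: "rho \<ge> 1" and c: "cval > c"
    and full: "\<forall>j<rho. (\<lambda>r. g*D + r) ` {..<m} \<subseteq> Ts j"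
  shows "bad_cut_approx c (NN G) (EE G) rho Ts"
  unfolding bad_cut_approx_def
proof (intro exI[of _ "{vmap g 0}"] conjI disjI1)
  show "{vmap g 0} \<subseteq> {..<NN G}" using vmap_less[OF g] by simp
  have card: "card (cut_edges (EE G) {vmap g 0}) = m"
    unfolding cut_a[OF g] by (subst card_image) (auto simp: inj_on_def)
  have w: "sample_weight (NN G) (EE G) rho Ts i = cval" if "i \<in> cut_edges (EE G) {vmap g 0}" for i
  proof -
    have "i \<in> (\<lambda>r. g*D + r) ` {..<m}" using that cut_a[OF g] by simp
    then obtain r where r: "r < m" "i = g*D + r" by auto
    have "{j. j < rho \<and> i \<in> Ts j} = {..<rho}" using full r by auto
    thus ?thesis using rho cond_val[OF g r(1)] r(2) by (simp add: sample_weight_def)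
  qed
  have "(\<Sum>i\<in>cut_edges (EE G) {vmap g 0}. sample_weight (NN G) (EE G) rho Ts i) = real m * cval"
    using card w by simp
  moreover have "real m * cval > c * real m" using c m1 by (simp add: mult.commute)
  ultimately show "(\<Sum>i\<in>cut_edges (EE G) {vmap g 0}. sample_weight (NN G) (EE G) rho Ts i)
      > c * real (card (cut_edges (EE G) {vmap g 0}))" using card by simp
qed

end


context gad begin

definition locf :: "nat \<Rightarrow> nat set \<Rightarrow> nat \<Rightarrow> nat set" where
  "locf G T = (\<lambda>g. if g < G then loc g T else {})"

lemma ST_sub: "T \<in> spanning_trees (NN G) (EE G) \<Longrightarrow> T \<subseteq> {..<G*D}"
  using spanning_iff by blast

lemma locf_image: "locf G ` spanning_trees (NN G) (EE G) = PiE_dflt {..<G} {} (\<lambda>_. L0)"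
proof (intro equalityI subsetI)
  fix f assume "f \<in> locf G ` spanning_trees (NN G) (EE G)"
  then obtain T where "T \<in> spanning_trees (NN G) (EE G)" "f = locf G T" by auto
  thus "f \<in> PiE_dflt {..<G} {} (\<lambda>_. L0)" using spanning_iff by (auto simp: PiE_dflt_def locf_def)
next
  fix f assume f: "f \<in> PiE_dflt {..<G} {} (\<lambda>_. L0)"
  define T where "T = {i. i < G*D \<and> i mod D \<in> f (i div D)}"
  have fsub: "f g \<subseteq> {..<D}" if "g < G" for g using f that by (auto simp: PiE_dflt_def L0_def)
  have lT: "loc g T = f g" if "g < G" for g unfolding T_def using loc_build[of g G f, OF that fsub[OF that]] .
  have "T \<in> spanning_trees (NN G) (EE G)"
    unfolding spanning_iff using lT f by (auto simp: T_def PiE_dflt_def)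
  moreover have "locf G T = f" using lT f by (auto simp: locf_def PiE_dflt_def fun_eq_iff)
  ultimately show "f \<in> locf G ` spanning_trees (NN G) (EE G)" by blast
qed

lemma locf_inj: "inj_on (locf G) (spanning_trees (NN G) (EE G))"
proof (rule inj_onI)
  fix T T' assume T: "T \<in> spanning_trees (NN G) (EE G)" "T' \<in> spanning_trees (NN G) (EE G)"
    and eq: "locf G T = locf G T'"
  have "loc g T = loc g T'" if "g < G" for g using eq that by (metis locf_def)
  moreover have "i < G*D \<Longrightarrow> i div D < G" for i using D_pos by (simp add: less_mult_imp_div_less)
  ultimately have "{i. i < G*D \<and> i mod D \<in> loc (i div D) T} = {i. i < G*D \<and> i mod D \<in> loc (i div D) T'}"
    by auto
  thus "T = T'" using build_loc[OF ST_sub[OF T(1)]] build_loc[OF ST_sub[OF T(2)]] by simp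
qed

lemma card_ST: "card (spanning_trees (NN G) (EE G)) = card L0 ^ G"
proof -
  have "card (spanning_trees (NN G) (EE G)) = card (locf G ` spanning_trees (NN G) (EE G))"
    using locf_inj by (simp add: card_image)
  also have "\<dots> = card L0 ^ G" unfolding locf_image
    using finite_L0 by (subst card_PiE_dflt) auto
  finally show ?thesis .
qed

lemma L0_ne: "L0 \<noteq> {}" using X0_L0 by auto

lemma card_L0_pos: "card L0 > 0" using L0_ne finite_L0 by (simp add: card_gt_0_iff)

lemma finite_ST: "finite (spanning_trees (NN G) (EE G))"
  using card_ST card_L0_pos card_ge_0_finite by (metis card.infinite less_numeral_extra(3) power_not_zero)

lemma ST_ne: "spanning_trees (NN G) (EE G) \<noteq> {}"
  using card_ST card_L0_pos by (metis card.empty power_not_zero less_numeral_extra(3))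

definition Afull :: "nat \<Rightarrow> nat set" where "Afull g = (\<lambda>r. g*D + r) ` {..<m}"

lemma Afull_loc:
  assumes "g < G" "T \<subseteq> {..<G*D}"
  shows "Afull g \<subseteq> T \<longleftrightarrow> {..<m} \<subseteq> loc g T"
  using assms m_less_D idx_less[OF assms(1)] by (auto simp: Afull_def loc_def)

lemma count_bound:
  fixes rho G :: nat
  defines "Om \<equiv> PiE_dflt {..<rho} {} (\<lambda>_. spanning_trees (NN G) (EE G))"
  defines "Cmp \<equiv> {Ts. \<forall>g<G. \<exists>j<rho. \<not> Afull g \<subseteq> Ts j}"
  shows "card (Om \<inter> Cmp) \<le> (card L0 ^ rho - card F0 ^ rho) ^ G"
proof -
  define B where "B = PiE_dflt {..<rho} {} (\<lambda>_. L0) - PiE_dflt {..<rho} {} (\<lambda>_. F0)"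
  define iota where "iota Ts = (\<lambda>g. if g < G then (\<lambda>j. if j < rho then loc g (Ts j) else {}) else (\<lambda>_::nat. {}))"
    for Ts :: "nat \<Rightarrow> nat set"
  have fin: "finite (PiE_dflt {..<rho} {} (\<lambda>_. L0))" using finite_L0 by auto
  have sub: "PiE_dflt {..<rho} {} (\<lambda>_. F0) \<subseteq> PiE_dflt {..<rho} {} (\<lambda>_. L0)"
    using F0_sub by (auto simp: PiE_dflt_def)
  have finF: "finite (PiE_dflt {..<rho} {} (\<lambda>_. F0))" using fin sub finite_subset by blast
  have cB: "card B = card L0 ^ rho - card F0 ^ rho"
    unfolding B_def using fin sub finF
    by (simp add: card_Diff_subset card_PiE_dflt finite_L0 finite_subset[OF F0_sub finite_L0])
  have finB: "finite B" using fin by (simp add: B_def)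
  have maps: "iota ` (Om \<inter> Cmp) \<subseteq> PiE_dflt {..<G} (\<lambda>_. {}) (\<lambda>_. B)"
  proof (rule subsetI)
    fix F assume "F \<in> iota ` (Om \<inter> Cmp)"
    then obtain Ts where Ts: "Ts \<in> Om" "Ts \<in> Cmp" "F = iota Ts" by auto
    have sp: "Ts j \<in> spanning_trees (NN G) (EE G)" if "j < rho" for j using Ts(1) that
      by (auto simp: Om_def PiE_dflt_def)
    have inL: "iota Ts g \<in> PiE_dflt {..<rho} {} (\<lambda>_. L0)" if "g < G" for g
      using sp that spanning_iff by (auto simp: iota_def PiE_dflt_def)
    have notF: "iota Ts g \<notin> PiE_dflt {..<rho} {} (\<lambda>_. F0)" if gG: "g < G" for g
    proof
      assume a: "iota Ts g \<in> PiE_dflt {..<rho} {} (\<lambda>_. F0)"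
      obtain j where j: "j < rho" "\<not> Afull g \<subseteq> Ts j" using Ts(2) gG unfolding Cmp_def by blast
      have "loc g (Ts j) \<in> F0" using a j gG by (auto simp: iota_def PiE_dflt_def)
      hence "{..<m} \<subseteq> loc g (Ts j)" by (simp add: F0_def)
      thus False using j Afull_loc[OF gG ST_sub[OF sp[OF j(1)]]] by simp
    qed
    show "F \<in> PiE_dflt {..<G} (\<lambda>_. {}) (\<lambda>_. B)"
      using inL notF Ts(3) unfolding PiE_dflt_def B_def by (auto simp: iota_def) (meson)
  qed
  have inj: "inj_on iota (Om \<inter> Cmp)"
  proof (rule inj_onI)
    fix Ts Ts' assume a: "Ts \<in> Om \<inter> Cmp" "Ts' \<in> Om \<inter> Cmp" "iota Ts = iota Ts'"
    show "Ts = Ts'"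
    proof
      fix j
      show "Ts j = Ts' j"
      proof (cases "j < rho")
        case False thus ?thesis using a by (auto simp: Om_def PiE_dflt_def)
      next
        case True
        have sp: "Ts j \<in> spanning_trees (NN G) (EE G)" "Ts' j \<in> spanning_trees (NN G) (EE G)"
          using a True by (auto simp: Om_def PiE_dflt_def)
        have "loc g (Ts j) = loc g (Ts' j)" if "g < G" for g
          using fun_cong[OF fun_cong[OF a(3), of g], of j] that True by (simp add: iota_def)
        moreover have "i < G*D \<Longrightarrow> i div D < G" for i using D_pos by (simp add: less_mult_imp_div_less)
        ultimately have "{i. i < G*D \<and> i mod D \<in> loc (i div D) (Ts j)} = {i. i < G*D \<and> i mod D \<in> loc (i div D) (Ts' j)}"
          by auto
        thus ?thesis using build_loc[OF ST_sub[OF sp(1)]] build_loc[OF ST_sub[OF sp(2)]] by simp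
      qed
    qed
  qed
  have "card (Om \<inter> Cmp) \<le> card (PiE_dflt {..<G} (\<lambda>_. {}) (\<lambda>_. B))"
    by (rule card_inj_on_le[OF inj maps]) (use finB in auto)
  also have "\<dots> = card B ^ G" using finB by (subst card_PiE_dflt) auto
  finally show ?thesis using cB by simp
qed

lemma prob_bound:
  fixes rho :: nat and c :: real
  assumes rho: "rho \<ge> 1" and c: "cval > c"
  shows "measure_pmf.prob (tree_samples (NN G) (EE G) rho) {Ts. bad_cut_approx c (NN G) (EE G) rho Ts}
     \<ge> 1 - (1 - (real (card F0) / real (card L0)) ^ rho) ^ G"
proof -
  let ?ST = "spanning_trees (NN G) (EE G)"
  define Om where "Om = PiE_dflt {..<rho} {} (\<lambda>_. ?ST)"
  define Cmp where "Cmp = {Ts. \<forall>g<G. \<exists>j<rho. \<not> Afull g \<subseteq> Ts j}"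
  define Bad where "Bad = {Ts. bad_cut_approx c (NN G) (EE G) rho Ts}"
  have finOm: "finite Om" using finite_ST by (auto simp: Om_def)
  have neOm: "Om \<noteq> {}" using ST_ne by (simp add: Om_def)
  have ts: "tree_samples (NN G) (EE G) rho = pmf_of_set Om"
    unfolding tree_samples_def Om_def by (rule Pi_pmf_of_set) (simp_all add: finite_ST ST_ne)
  have cOm: "card Om = (card L0 ^ G) ^ rho"
    using finite_ST by (simp add: Om_def card_PiE_dflt card_ST)
  have "Om - Cmp \<subseteq> Om \<inter> Bad"
  proof
    fix Ts assume "Ts \<in> Om - Cmp"
    then obtain g where g: "g < G" "\<forall>j<rho. Afull g \<subseteq> Ts j" by (auto simp: Cmp_def)
    hence "bad_cut_approx c (NN G) (EE G) rho Ts"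
      using bad_from_full[OF g(1) rho c] by (simp add: Afull_def)
    thus "Ts \<in> Om \<inter> Bad" using \<open>Ts \<in> Om - Cmp\<close> by (simp add: Bad_def)
  qed
  hence "card (Om - Cmp) \<le> card (Om \<inter> Bad)" using finOm by (intro card_mono) auto
  moreover have "card (Om - Cmp) = card Om - card (Om \<inter> Cmp)"
    using finOm by (metis card_Diff_subset_Int finite_Int Diff_Int2 Int_commute)
  ultimately have cb: "real (card (Om \<inter> Bad)) \<ge> real (card Om) - real ((card L0 ^ rho - card F0 ^ rho) ^ G)"
    using count_bound[of rho G] card_mono[OF finOm, of "Om \<inter> Cmp"] unfolding Om_def Cmp_def
    by (smt (verit) Int_lower1 of_nat_diff of_nat_le_iff card_mono finOm Om_def)
  have L: "real (card L0) > 0" using card_L0_pos by simp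
  have FL: "card F0 \<le> card L0" using card_mono[OF finite_L0 F0_sub] .
  have FLr: "card F0 ^ rho \<le> card L0 ^ rho" using FL by (rule power_mono) simp
  have "measure_pmf.prob (tree_samples (NN G) (EE G) rho) Bad = real (card (Om \<inter> Bad)) / real (card Om)"
    unfolding ts using measure_pmf_of_set[OF neOm finOm] by simp
  also have "\<dots> \<ge> (real (card Om) - real ((card L0 ^ rho - card F0 ^ rho) ^ G)) / real (card Om)"
    using cb neOm finOm by (intro divide_right_mono) auto
  also have "(real (card Om) - real ((card L0 ^ rho - card F0 ^ rho) ^ G)) / real (card Om)
      = 1 - (1 - (real (card F0) / real (card L0)) ^ rho) ^ G"
  proof -
    have "real ((card L0 ^ rho - card F0 ^ rho) ^ G) = (real (card L0) ^ rho - real (card F0) ^ rho) ^ G"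
      using FLr by (simp add: of_nat_diff)
    also have "\<dots> = (real (card L0) ^ rho * (1 - (real (card F0) / real (card L0)) ^ rho)) ^ G"
    proof -
      have "real (card L0) ^ rho \<noteq> 0" using L by simp
      hence "real (card L0) ^ rho * (1 - (real (card F0) / real (card L0)) ^ rho) = real (card L0) ^ rho - real (card F0) ^ rho"
        by (simp add: power_divide right_diff_distrib)
      thus ?thesis by simp
    qed
    also have "\<dots> = real (card Om) * (1 - (real (card F0) / real (card L0)) ^ rho) ^ G"
      by (simp add: cOm power_mult_distrib power_mult[symmetric] mult.commute)
    finally have "real ((card L0 ^ rho - card F0 ^ rho) ^ G) = real (card Om) * (1 - (real (card F0) / real (card L0)) ^ rho) ^ G" .
    moreover have "real (card Om) > 0" using neOm finOm by (simp add: card_gt_0_iff)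
    ultimately show ?thesis by (simp add: field_simps)
  qed
  finally show ?thesis by (simp add: Bad_def)
qed

end


lemma pow_bound:
  fixes q :: real and G rho :: nat
  assumes q: "0 < q" "q \<le> 1" and G: "G \<ge> 1" and r: "real rho * (- ln q) \<le> ln (real G)"
  shows "(1 - q ^ rho) ^ G \<le> 1/2"
proof -
  have "ln (q ^ rho) = real rho * ln q" using q by (simp add: ln_realpow)
  hence "ln (q ^ rho) \<ge> - ln (real G)" using r by simp
  hence "q ^ rho \<ge> exp (- ln (real G))" using q by (metis exp_ln exp_le_cancel_iff zero_less_power)
  also have "exp (- ln (real G)) = 1 / real G" using G by (simp add: exp_minus inverse_eq_divide)
  finally have qr: "q ^ rho \<ge> 1 / real G" .
  have q1: "q ^ rho \<le> 1" using q by (simp add: power_le_one)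
  have "(1 - q ^ rho) ^ G \<le> (1 - 1 / real G) ^ G"
    using qr q1 by (intro power_mono) auto
  also have "\<dots> \<le> exp (- (1 / real G)) ^ G"
  proof (rule power_mono)
    show "1 - 1 / real G \<le> exp (- (1 / real G))" using exp_ge_add_one_self[of "- (1 / real G)"] by simp
    show "0 \<le> 1 - 1 / real G" using G by simp
  qed
  also have "\<dots> = exp (- 1)" using G by (simp add: exp_of_nat_mult[symmetric])
  also have "\<dots> \<le> 1/2"
  proof -
    have "exp (1::real) \<ge> 2" using exp_ge_add_one_self[of 1] by simp
    thus ?thesis by (simp add: exp_minus field_simps)
  qed
  finally show ?thesis .
qed

theorem lemma1p10:
  fixes c :: real
  assumes "c \<ge> 1"
  shows "\<exists>(N :: nat \<Rightarrow> nat) (E :: nat \<Rightarrow> (nat \<times> nat) list) (p :: real).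
     (\<forall>k. wf_graph (N k) (E k) \<and> connected_graph (N k) (E k)) \<and>
     filterlim N at_top sequentially \<and> p > 0 \<and>
     (\<forall>rho :: nat \<Rightarrow> nat. (\<forall>k. rho k \<ge> 1) \<longrightarrow>
        ((\<lambda>k. real (rho k) / ln (real (N k))) \<longlonglongrightarrow> 0) \<longrightarrow>
        (\<forall>\<^sub>F k in sequentially.
           measure_pmf.prob (tree_samples (N k) (E k) (rho k))
             {Ts. bad_cut_approx c (N k) (E k) (rho k) Ts} \<ge> p))"
proof -
  define m where "m = nat \<lceil>2*c\<rceil>"
  have m2c: "real m \<ge> 2*c" unfolding m_def using assms by linarith
  have m2: "m \<ge> 2" using m2c assms by linarith
  interpret gad m m using m2 by unfold_locales auto
  have cv: "cval > c"
  proof -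
    have "cval = (real m + 1) / 2" using m2 by (simp add: cval_def field_simps)
    thus ?thesis using m2c by simp
  qed
  define q where "q = real (card F0) / real (card L0)"
  have "card F0 > 0" using X0_F0 finite_subset[OF F0_sub finite_L0] by (auto simp: card_gt_0_iff)
  hence q0: "q > 0" unfolding q_def using card_L0_pos by simp
  have q1: "q \<le> 1" unfolding q_def using card_L0_pos card_mono[OF finite_L0 F0_sub] by simp
  define Gk where "Gk k = k + m + 2" for k :: nat
  define N where "N k = NN (Gk k)" for k
  define E where "E k = EE (Gk k)" for k
  have NG: "real (N k) \<le> real (Gk k) ^ 2" for k
  proof -
    have "N k = 1 + Gk k * (m + 1)" by (simp add: N_def NN_def)
    also have "\<dots> \<le> Gk k * Gk k"
    proof -
      have "Gk k * (m+1) + Gk k \<le> Gk k * Gk k" unfolding Gk_def by (simp add: algebra_simps)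
      moreover have "1 \<le> Gk k" by (simp add: Gk_def)
      ultimately show ?thesis by linarith
    qed
    finally show ?thesis by (simp add: power2_eq_square flip: of_nat_mult)
  qed
  have Nge: "N k \<ge> k" "N k \<ge> 2" for k unfolding N_def NN_def Gk_def by auto
  show ?thesis
  proof (intro exI[of _ N] exI[of _ E] exI[of _ "1/2"] conjI allI impI)
    fix k show "wf_graph (N k) (E k)" "connected_graph (N k) (E k)"
      by (simp_all add: N_def E_def wf_EE connected_EE)
  next
    show "filterlim N at_top sequentially"
      by (rule filterlim_at_top_mono[OF filterlim_ident]) (use Nge in auto)
  next
    show "(0::real) < 1/2" by simp
  next
    fix rho :: "nat \<Rightarrow> nat"
    assume r1: "\<forall>k. rho k \<ge> 1" and lim: "(\<lambda>k. real (rho k) / ln (real (N k))) \<longlonglongrightarrow> 0"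
    define a where "a = - ln q"
    have a0: "a \<ge> 0" using q0 q1 by (simp add: a_def)
    define eps where "eps = 1 / (2 * (a + 1))"
    have eps: "eps > 0" using a0 by (simp add: eps_def)
    have ev: "\<forall>\<^sub>F k in sequentially. real (rho k) / ln (real (N k)) < eps"
      using order_tendstoD(2)[OF lim eps] .
    show "\<forall>\<^sub>F k in sequentially.
           1/2 \<le> measure_pmf.prob (tree_samples (N k) (E k) (rho k))
             {Ts. bad_cut_approx c (N k) (E k) (rho k) Ts}"
      using ev
    proof (rule eventually_mono)
      fix k assume k: "real (rho k) / ln (real (N k)) < eps"
      have lnN: "ln (real (N k)) > 0" using Nge(2)[of k] by simp
      have rk: "real (rho k) < eps * ln (real (N k))" using k lnN by (simp add: field_simps)
      have G1: "Gk k \<ge> 1" by (simp add: Gk_def)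
      have "ln (real (N k)) \<le> ln (real (Gk k) ^ 2)"
        using NG[of k] Nge(2)[of k] G1 by (subst ln_le_cancel_iff) auto
      also have "\<dots> = 2 * ln (real (Gk k))" using G1 by (simp add: ln_realpow)
      finally have lnG: "ln (real (N k)) \<le> 2 * ln (real (Gk k))" .
      have "real (rho k) * a \<le> real (rho k) * (a + 1)" by (intro mult_left_mono) auto
      also have "\<dots> \<le> eps * ln (real (N k)) * (a + 1)" using rk a0 by (intro mult_right_mono) auto
      also have "\<dots> = ln (real (N k)) / 2" using a0 by (simp add: eps_def field_simps)
      also have "\<dots> \<le> ln (real (Gk k))" using lnG by simp
      finally have "real (rho k) * (- ln q) \<le> ln (real (Gk k))" by (simp add: a_def)
      hence pb: "(1 - q ^ rho k) ^ Gk k \<le> 1/2" using pow_bound[OF q0 q1 G1] by blast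
      have "measure_pmf.prob (tree_samples (N k) (E k) (rho k)) {Ts. bad_cut_approx c (N k) (E k) (rho k) Ts}
         \<ge> 1 - (1 - q ^ rho k) ^ Gk k"
        unfolding N_def E_def q_def using prob_bound[OF _ cv] r1 by blast
      thus "1/2 \<le> measure_pmf.prob (tree_samples (N k) (E k) (rho k)) {Ts. bad_cut_approx c (N k) (E k) (rho k) Ts}"
        using pb by linarith
    qed
  qed
qed


end
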